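(* Let $\alpha,\beta,\gamma\in\mathbb{R}$ with $\gamma\neq 0$, and let $G_2$ be the connected, simply connected Lie group whose Lie algebra $\mathfrak{g}_2$ has a basis $\{e_1,e_2,e_3\}$ with $[e_1,e_2]=\gamma e_2-\beta e_3$, $[e_1,e_3]=-\beta e_2-\gamma e_3$, $[e_2,e_3]=\alpha e_1$, equipped with the left-invariant Lorentzian metric $g$ for which $\{e_1,e_2,e_3\}$ is pseudo-orthonormal with $e_3$ timelike, and with the product structure $J$. Let $\lambda_0,c\in\mathbb{R}$. Then there exists a derivation $D$ of $\mathfrak{g}_2$ with $\widetilde{\mathrm{Ric}}^0=(s^0\lambda_0+c)\mathrm{Id}+D$ (i.e. $(G_2,g,J)$ is an algebraic Schouten soliton associated to the canonical connection $\nabla^0$) if and only if $\alpha=\beta=0$ and $c=-\gamma^2+2\gamma^2\lambda_0$.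
   Context: Pseudo-orthonormal means $g(e_1,e_1)=g(e_2,e_2)=1$, $g(e_3,e_3)=-1$, $g(e_i,e_j)=0$ for $i\neq j$; left-invariant tensors are identified with their values on $\mathfrak{g}$. $\nabla$ is the Levi-Civita connection of $g$. The product structure $J$ is the left-invariant endomorphism with $Je_1=e_1$, $Je_2=e_2$, $Je_3=-e_3$. The canonical connection is $\nabla^0_XY=\nabla_XY-\frac12(\nabla_XJ)JY$, and the Kobayashi–Nomizu connection is $\nabla^1_XY=\nabla^0_XY-\frac14[(\nabla_YJ)JX-(\nabla_{JY}J)X]$. For $k=0,1$: $R^k(X,Y)Z=\nabla^k_X\nabla^k_YZ-\nabla^k_Y\nabla^k_XZ-\nabla^k_{[X,Y]}Z$; $\rho^k(X,Y)=-g(R^k(X,e_1)Y,e_1)-g(R^k(X,e_2)Y,e_2)+g(R^k(X,e_3)Y,e_3)$; $\widetilde\rho^k(X,Y)=\frac12(\rho^k(X,Y)+\rho^k(Y,X))$; $\widetilde{\mathrm{Ric}}^k$ is defined by $\widetilde\rho^k(X,Y)=g(\widetilde{\mathrm{Ric}}^k(X),Y)$; and $s^k=\widetilde\rho^k(e_1,e_1)+\widetilde\rho^k(e_2,e_2)-\widetilde\rho^k(e_3,e_3)$. A derivation of $\mathfrak{g}$ is a linear map $D$ with $D[X,Y]=[DX,Y]+[X,DY]$. $(G,g,J)$ is an algebraic Schouten soliton associated to $\nabla^k$ (with real constants $\lambda_0,c$) if $\widetilde{\mathrm{Ric}}^k=(s^k\lambda_0+c)\mathrm{Id}+D$ for some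 derivation $D$. *)

theory Defs
  imports "HOL-Analysis.Analysis"
begin

text \<open>The Lie algebra g_2 is modelled as real^3, coordinates w.r.t. the basis e1 e2 e3.
  Parameters a b c stand for alpha beta gamma. All tensors are left-invariant,
  hence identified with their values on the Lie algebra.\<close>

definition e1 :: "real^3" where "e1 = vector [1, 0, 0]"
definition e2 :: "real^3" where "e2 = vector [0, 1, 0]"
definition e3 :: "real^3" where "e3 = vector [0, 0, 1]"

definition br :: "real \<Rightarrow> real \<Rightarrow> real \<Rightarrow> real^3 \<Rightarrow> real^3 \<Rightarrow> real^3" where
  "br a b c X Y =
     (X$1 * Y$2 - X$2 * Y$1) *\<^sub>R (c *\<^sub>R e2 - b *\<^sub>R e3)
   + (X$1 * Y$3 - X$3 * Y$1) *\<^sub>R ((- b) *\<^sub>R e2 - c *\<^sub>R e3)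
   + (X$2 * Y$3 - X$3 * Y$2) *\<^sub>R (a *\<^sub>R e1)"

definition gL :: "real^3 \<Rightarrow> real^3 \<Rightarrow> real" where
  "gL X Y = X$1 * Y$1 + X$2 * Y$2 - X$3 * Y$3"

text \<open>Metric dual: the vector V with gL V Z = f Z for a linear functional f.\<close>
definition raise :: "(real^3 \<Rightarrow> real) \<Rightarrow> real^3" where
  "raise f = f e1 *\<^sub>R e1 + f e2 *\<^sub>R e2 - f e3 *\<^sub>R e3"

text \<open>Levi-Civita connection on left-invariant fields (Koszul formula):
  2 g(nabla_X Y, Z) = g([X,Y],Z) - g([Y,Z],X) + g([Z,X],Y).\<close>
definition LC :: "real \<Rightarrow> real \<Rightarrow> real \<Rightarrow> real^3 \<Rightarrow> real^3 \<Rightarrow> real^3" where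
  "LC a b c X Y = raise (\<lambda>Z. (gL (br a b c X Y) Z - gL (br a b c Y Z) X + gL (br a b c Z X) Y) / 2)"

definition Jop :: "real^3 \<Rightarrow> real^3" where
  "Jop X = X$1 *\<^sub>R e1 + X$2 *\<^sub>R e2 - X$3 *\<^sub>R e3"

definition covJ :: "real \<Rightarrow> real \<Rightarrow> real \<Rightarrow> real^3 \<Rightarrow> real^3 \<Rightarrow> real^3" where
  "covJ a b c X Y = LC a b c X (Jop Y) - Jop (LC a b c X Y)"

definition can0 :: "real \<Rightarrow> real \<Rightarrow> real \<Rightarrow> real^3 \<Rightarrow> real^3 \<Rightarrow> real^3" where
  "can0 a b c X Y = LC a b c X Y - (1/2) *\<^sub>R covJ a b c X (Jop Y)"

definition R0 :: "real \<Rightarrow> real \<Rightarrow> real \<Rightarrow> real^3 \<Rightarrow> real^3 \<Rightarrow> real^3 \<Rightarrow> real^3" where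
  "R0 a b c X Y Z = can0 a b c X (can0 a b c Y Z) - can0 a b c Y (can0 a b c X Z)
                    - can0 a b c (br a b c X Y) Z"

definition rho0 :: "real \<Rightarrow> real \<Rightarrow> real \<Rightarrow> real^3 \<Rightarrow> real^3 \<Rightarrow> real" where
  "rho0 a b c X Y = - gL (R0 a b c X e1 Y) e1 - gL (R0 a b c X e2 Y) e2 + gL (R0 a b c X e3 Y) e3"

definition rhot0 :: "real \<Rightarrow> real \<Rightarrow> real \<Rightarrow> real^3 \<Rightarrow> real^3 \<Rightarrow> real" where
  "rhot0 a b c X Y = (rho0 a b c X Y + rho0 a b c Y X) / 2"

definition Ric0 :: "real \<Rightarrow> real \<Rightarrow> real \<Rightarrow> real^3 \<Rightarrow> real^3" where
  "Ric0 a b c X = raise (rhot0 a b c X)"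

definition s0 :: "real \<Rightarrow> real \<Rightarrow> real \<Rightarrow> real" where
  "s0 a b c = rhot0 a b c e1 e1 + rhot0 a b c e2 e2 - rhot0 a b c e3 e3"

definition is_derivation :: "real \<Rightarrow> real \<Rightarrow> real \<Rightarrow> (real^3 \<Rightarrow> real^3) \<Rightarrow> bool" where
  "is_derivation a b c D \<longleftrightarrow> linear D \<and>
     (\<forall>X Y. D (br a b c X Y) = br a b c (D X) Y + br a b c X (D Y))"

definition alg_schouten_soliton0 :: "real \<Rightarrow> real \<Rightarrow> real \<Rightarrow> real \<Rightarrow> real \<Rightarrow> bool" where
  "alg_schouten_soliton0 a b c lam0 cc \<longleftrightarrow>
     (\<exists>D. is_derivation a b c D \<and>
          (\<forall>X. Ric0 a b c X = (s0 a b c * lam0 + cc) *\<^sub>R X + D X))"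

end

theory Submission
  imports Defs
begin

lemma br_comp: "br a b c X Y = vector [a*(X$2*Y$3 - X$3*Y$2),
   c*(X$1*Y$2 - X$2*Y$1) - b*(X$1*Y$3 - X$3*Y$1),
   - b*(X$1*Y$2 - X$2*Y$1) - c*(X$1*Y$3 - X$3*Y$1)]"
  by (simp add: br_def vec_eq_iff forall_3 e1_def e2_def e3_def vector_3 algebra_simps)

lemma can0_comp: "can0 a b c X Y = vector [c*X$2*Y$2 - a/2*X$3*Y$2, - c*X$2*Y$1 + a/2*X$3*Y$1, 0]"
  apply (simp add: can0_def covJ_def LC_def raise_def gL_def Jop_def br_comp vec_eq_iff forall_3 e1_def e2_def e3_def vector_3)
  apply (simp add: algebra_simps field_simps)
  done

lemma R0_comp: "R0 a b c X Y Z = can0 a b c X (can0 a b c Y Z) - can0 a b c Y (can0 a b c X Z) - can0 a b c (br a b c X Y) Z"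
  by (simp add: R0_def)

lemma Ric0_comp: "Ric0 a b c X = vector [(- (c*c) - a*b/2)*X$1, (- (c*c) - a*b/2)*X$2 - (a*c/4 - b*c/2)*X$3, (a*c/4 - b*c/2)*X$2]"
  apply (simp add: Ric0_def raise_def rhot0_def rho0_def R0_def can0_comp br_comp gL_def vec_eq_iff forall_3 e1_def e2_def e3_def vector_3)
  apply (simp add: algebra_simps field_simps power2_eq_square)
  done

lemma s0_comp: "s0 a b c = - 2*(c*c) - a*b"
  by (simp add: s0_def rhot0_def rho0_def R0_def can0_comp br_comp gL_def e1_def e2_def e3_def vector_3)

theorem theorem4p4:
  fixes \<alpha> \<beta> \<gamma> lambda0 c :: real
  assumes "\<gamma> \<noteq> 0"
  shows "alg_schouten_soliton0 \<alpha> \<beta> \<gamma> lambda0 c \<longleftrightarrow>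
           \<alpha> = 0 \<and> \<beta> = 0 \<and> c = - \<gamma>\<^sup>2 + 2 * \<gamma>\<^sup>2 * lambda0"
proof
  assume "alg_schouten_soliton0 \<alpha> \<beta> \<gamma> lambda0 c"
  then obtain D where der: "is_derivation \<alpha> \<beta> \<gamma> D"
    and ric: "\<And>X. Ric0 \<alpha> \<beta> \<gamma> X = (s0 \<alpha> \<beta> \<gamma> * lambda0 + c) *\<^sub>R X + D X"
    unfolding alg_schouten_soliton0_def by blast
  define k where "k = s0 \<alpha> \<beta> \<gamma> * lambda0 + c"
  define r where "r = - (\<gamma>*\<gamma>) - \<alpha>*\<beta>/2"
  define m where "m = \<alpha>*\<gamma>/4 - \<beta>*\<gamma>/2"
  define p where "p = r - k"
  have hD: "\<And>X. D X = vector [p * X$1, p*X$2 - m*X$3, m*X$2 - k*X$3]"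
  proof -
    fix X :: "real^3"
    have "D X = Ric0 \<alpha> \<beta> \<gamma> X - k *\<^sub>R X" using ric[of X] k_def by simp
    then show "D X = vector [p * X$1, p*X$2 - m*X$3, m*X$2 - k*X$3]"
      by (simp add: Ric0_comp vec_eq_iff forall_3 vector_3 p_def r_def m_def algebra_simps)
  qed
  have dr: "\<And>X Y. D (br \<alpha> \<beta> \<gamma> X Y) = br \<alpha> \<beta> \<gamma> (D X) Y + br \<alpha> \<beta> \<gamma> X (D Y)"
    using der unfolding is_derivation_def by blast
  have E12: "\<gamma>*p + \<beta>*m = 2*p*\<gamma> - \<beta>*m \<and> \<gamma>*m + \<beta>*k = -2*p*\<beta> - m*\<gamma>"
    using dr[of e1 e2] by (simp add: hD br_comp vec_eq_iff forall_3 vector_3 e1_def e2_def e3_def algebra_simps)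
  have E23: "\<alpha>*p = \<alpha>*(p-k)"
    using dr[of e2 e3] by (simp add: hD br_comp vec_eq_iff forall_3 vector_3 e1_def e2_def e3_def algebra_simps)
  have E13: "-\<beta>*p + \<gamma>*m = -p*\<beta> - m*\<gamma> + k*\<beta>"
    using dr[of e1 e3] by (simp add: hD br_comp vec_eq_iff forall_3 vector_3 e1_def e2_def e3_def algebra_simps)
  have F1: "\<gamma>*p = 2*\<beta>*m" using E12 by algebra
  have F2: "2*\<gamma>*m + \<beta>*k + 2*p*\<beta> = 0" using E12 by algebra
  have F3: "\<alpha>*k = 0" using E23 by (simp add: algebra_simps)
  have F4: "2*\<gamma>*m = k*\<beta>" using E13 by algebra
  have a0: "\<alpha> = 0"
  proof (rule ccontr)
    assume "\<alpha> \<noteq> 0"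
    then have "k = 0" using F3 by simp
    then have "m = 0" using F4 assms by simp
    then have "p = 0" using F1 assms by simp
    then have "r = 0" using \<open>k = 0\<close> p_def by simp
    have "\<gamma>*(\<alpha> - 2*\<beta>) = 4*m" unfolding m_def by (simp add: field_simps)
    then have "\<alpha> - 2*\<beta> = 0" using \<open>m = 0\<close> assms by simp
    then have "\<alpha> = 2*\<beta>" by simp
    then have "\<gamma>*\<gamma> = - (\<beta>*\<beta>)" using \<open>r = 0\<close> unfolding r_def by simp
    moreover have "\<gamma>*\<gamma> \<ge> 0" "\<beta>*\<beta> \<ge> 0" by simp_all
    ultimately have "\<gamma>*\<gamma> = 0" by linarith
    then have "\<gamma> = 0" by simp
    then show False using assms by simp
  qed
  have m2: "m = - \<beta>*\<gamma>/2" using a0 m_def by simp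
  have r2: "r = - (\<gamma>*\<gamma>)" using a0 r_def by simp
  have "\<gamma>*p = \<gamma>*(- \<beta>*\<beta>)" using F1 m2 by (simp add: algebra_simps)
  then have p2: "p = - \<beta>*\<beta>" using assms mult_left_cancel by blast
  have b0: "\<beta> = 0"
  proof (rule ccontr)
    assume "\<beta> \<noteq> 0"
    have "(- \<gamma>*\<gamma>)*\<beta> = k*\<beta>" using F4 m2 by (simp add: algebra_simps)
    then have "k = - \<gamma>*\<gamma>" using \<open>\<beta> \<noteq> 0\<close> mult_right_cancel by metis
    then have "\<beta>*\<beta> = 0" using p2 r2 p_def by simp
    then show False using \<open>\<beta> \<noteq> 0\<close> by simp
  qed
  have "k = - \<gamma>*\<gamma>" using p2 r2 p_def b0 by simp
  moreover have "s0 \<alpha> \<beta> \<gamma> = - 2*(\<gamma>*\<gamma>)" using a0 by (simp add: s0_comp)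
  ultimately have "c = - \<gamma>*\<gamma> + 2*(\<gamma>*\<gamma>)*lambda0" using k_def by (simp add: algebra_simps)
  then show "\<alpha> = 0 \<and> \<beta> = 0 \<and> c = - \<gamma>\<^sup>2 + 2 * \<gamma>\<^sup>2 * lambda0"
    using a0 b0 by (simp add: power2_eq_square)
next
  assume h: "\<alpha> = 0 \<and> \<beta> = 0 \<and> c = - \<gamma>\<^sup>2 + 2 * \<gamma>\<^sup>2 * lambda0"
  define D :: "real^3 \<Rightarrow> real^3" where "D = (\<lambda>X. vector [0, 0, \<gamma>*\<gamma>*X$3])"
  have ceq: "c = - (\<gamma>*\<gamma>) + 2*(\<gamma>*\<gamma>)*lambda0" using h by (simp add: power2_eq_square)
  have lin: "linear D"
    by (rule linearI) (simp_all add: D_def vec_eq_iff forall_3 vector_3 algebra_simps)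
  have der: "is_derivation \<alpha> \<beta> \<gamma> D"
    unfolding is_derivation_def using lin h
    by (simp add: D_def br_comp vec_eq_iff forall_3 vector_3 algebra_simps)
  have "\<forall>X. Ric0 \<alpha> \<beta> \<gamma> X = (s0 \<alpha> \<beta> \<gamma> * lambda0 + c) *\<^sub>R X + D X"
    unfolding ceq using h by (simp add: Ric0_comp s0_comp D_def vec_eq_iff forall_3 vector_3 algebra_simps power2_eq_square)
  then show "alg_schouten_soliton0 \<alpha> \<beta> \<gamma> lambda0 c"
    unfolding alg_schouten_soliton0_def using der by blast
qed

end
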